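(* Let $n\ge p$, $\alpha\neq-1$, $U,\widetilde U\in St(n,p)$, and let $Q\widehat N=(I_n-UU^T)\widetilde U$ be a compact QR-decomposition with $Q\in St(n,p)$, $\widehat N\in\mathbb{R}^{p\times p}$. Consider the following shooting iteration with threshold $\epsilon>0$ and time steps $0=t_0<t_1<\dots<t_m=1$: set $\gamma\leftarrow\|\widetilde U-U\|$ and $\Delta\leftarrow\gamma\,\Pi_U(\widetilde U)/\|\Pi_U(\widetilde U)\|$; while $\gamma>\epsilon$: set $\widetilde U^s(j)\leftarrow\operatorname{Exp}^\alpha_U(t_j\Delta)$ for $j=0,\dots,m$; set $\Delta^s\leftarrow\widetilde U^s(m)-\widetilde U$ and $\gamma\leftarrow\|\Delta^s\|$; for $j=m,m-1,\dots,0$ set $\Delta^s\leftarrow\gamma\,\Pi_{\widetilde U^s(j)}(\Delta^s)/\|\Pi_{\widetilde U^s(j)}(\Delta^s)\|$; then update $\Delta\leftarrow\Delta-\Delta^s$. Then every iterate $\Delta$ produced by this iteration, and every matrix $\Delta^s$ obtained at the end of one pass through the while-loop, has a representation \[ \Delta=UA+QR,\qquad \Delta^s=UA^s+QR^s,\qquad A,A^s\in\operatorname{Skew}(p),\ R,R^s\in\mathbb{R}^{p\times p}, \] with the same matrix $Q$ for all iterates.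
   Context: $St(n,p)=\{U\in\mathbb{R}^{n\times p}: U^TU=I_p\}$; $\operatorname{Skew}(p)$ is the set of real skew-symmetric $p\times p$ matrices; $\|\cdot\|$ is the Frobenius norm. For $W\in\mathbb{R}^{n\times p}$ and $Y\in St(n,p)$, $\Pi_Y(W)=W-Y\operatorname{sym}(Y^TW)$ with $\operatorname{sym}(X)=\frac12(X+X^T)$ (orthogonal projection onto $T_YSt(n,p)=\{\Delta: Y^T\Delta\in\operatorname{Skew}(p)\}$). The $\alpha$-metric is $\langle\Delta,\widetilde\Delta\rangle^\alpha_U=\operatorname{tr}\big(\Delta^T(I_n-\frac{2\alpha+1}{2(\alpha+1)}UU^T)\widetilde\Delta\big)$ and $\operatorname{Exp}^\alpha_U(\Delta)$ is the endpoint at time $1$ of its geodesic starting at $U$ with initial velocity $\Delta$ (so $\operatorname{Exp}^\alpha_U(0)=U$). *)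

theory Defs
  imports "HOL-Analysis.Analysis"
begin

text \<open>Matrices in R^{n x p} are rendered as real^'p^'n (rows indexed by 'n, columns by 'p).
  The norm on this type is the Frobenius norm.\<close>

definition stiefel :: "(real^'p^'n) set" where
  "stiefel = {U. transpose U ** U = mat 1}"

definition skew :: "real^'p^'p \<Rightarrow> bool" where
  "skew A \<longleftrightarrow> transpose A = - A"

definition msym :: "real^'p^'p \<Rightarrow> real^'p^'p" where
  "msym X = (1/2) *\<^sub>R (X + transpose X)"

definition proj_tan :: "real^'p^'n \<Rightarrow> real^'p^'n \<Rightarrow> real^'p^'n" where
  "proj_tan Y W = W - Y ** msym (transpose Y ** W)"

definition alpha_coef :: "real \<Rightarrow> real" where
  "alpha_coef \<alpha> = (2 * \<alpha> + 1) / (2 * (\<alpha> + 1))"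

definition alpha_metric :: "real \<Rightarrow> real^'p^'n \<Rightarrow> real^'p^'n \<Rightarrow> real^'p^'n \<Rightarrow> real" where
  "alpha_metric \<alpha> U D E = trace (transpose D ** (mat 1 - alpha_coef \<alpha> *\<^sub>R (U ** transpose U)) ** E)"

text \<open>Geodesics of the alpha-metric on St(n,p): twice differentiable curves in St(n,p)
  satisfying the Euler--Lagrange equation of the energy Lagrangian
  L(x,v) = alpha_metric alpha x v v constrained to St(n,p), i.e.
  Pi_c( d/dt (c' - k c c^T c') + k c' c'^T c ) = 0, where
  d/dt (c c^T c') = c' c^T c' + c c'^T c' + c c^T c''.\<close>
definition alpha_geodesic :: "real \<Rightarrow> (real \<Rightarrow> real^'p^'n) \<Rightarrow> bool" where
  "alpha_geodesic \<alpha> c \<longleftrightarrow> (\<forall>t. c t \<in> stiefel) \<and>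
     (\<exists>c1 c2. \<forall>t. (c has_vector_derivative c1 t) (at t) \<and>
        (c1 has_vector_derivative c2 t) (at t) \<and>
        proj_tan (c t)
          (c2 t - alpha_coef \<alpha> *\<^sub>R (c1 t ** transpose (c t) ** c1 t
                                   + c t ** transpose (c1 t) ** c1 t
                                   + c t ** transpose (c t) ** c2 t)
                + alpha_coef \<alpha> *\<^sub>R (c1 t ** transpose (c1 t) ** c t)) = 0)"

definition Exp_alpha :: "real \<Rightarrow> real^'p^'n \<Rightarrow> real^'p^'n \<Rightarrow> real^'p^'n" where
  "Exp_alpha \<alpha> U D = (THE Y. \<exists>c. alpha_geodesic \<alpha> c \<and> c 0 = U \<and>
       (c has_vector_derivative D) (at 0) \<and> c 1 = Y)"

definition norm_proj :: "real \<Rightarrow> real^'p^'n \<Rightarrow> real^'p^'n \<Rightarrow> real^'p^'n" where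
  "norm_proj \<gamma> Y D = (\<gamma> / norm (proj_tan Y D)) *\<^sub>R proj_tan Y D"

text \<open>One pass through the body of the while loop starting from Delta.
  Returns (Delta^s at the end of the pass, new gamma).\<close>
definition shoot_pass :: "real \<Rightarrow> (nat \<Rightarrow> real) \<Rightarrow> nat \<Rightarrow> real^'p^'n \<Rightarrow> real^'p^'n
    \<Rightarrow> real^'p^'n \<Rightarrow> (real^'p^'n) \<times> real" where
  "shoot_pass \<alpha> t m U Ut D =
     (let Us = (\<lambda>j. Exp_alpha \<alpha> U (t j *\<^sub>R D));
          Ds0 = Us m - Ut;
          \<gamma> = norm Ds0;
          Ds = fold (\<lambda>j E. norm_proj \<gamma> (Us j) E) (rev [0..<Suc m]) Ds0
      in (Ds, \<gamma>))"

text \<open>State (Delta, gamma) after k passes (ignoring the stopping test).\<close>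
primrec shoot_iter :: "real \<Rightarrow> (nat \<Rightarrow> real) \<Rightarrow> nat \<Rightarrow> real^'p^'n \<Rightarrow> real^'p^'n
    \<Rightarrow> nat \<Rightarrow> (real^'p^'n) \<times> real" where
  "shoot_iter \<alpha> t m U Ut 0 =
     (let \<gamma> = norm (Ut - U) in (norm_proj \<gamma> U Ut, \<gamma>))"
| "shoot_iter \<alpha> t m U Ut (Suc k) =
     (let D = fst (shoot_iter \<alpha> t m U Ut k) in
      (D - fst (shoot_pass \<alpha> t m U Ut D), snd (shoot_pass \<alpha> t m U Ut D)))"

end

theory Submission
  imports Defs
begin


typedef ('n::finite) sqm = "UNIV :: (real^'n^'n) set" morphisms mrep mabs by auto
setup_lifting type_definition_sqm

lemma bl_mv: "bounded_linear ((*v) (A::real^'n^'m))"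
  by (simp add: matrix_vector_mul_bounded_linear)

instantiation sqm :: (finite) real_normed_algebra_1
begin
lift_definition zero_sqm :: "'a sqm" is "0" .
lift_definition one_sqm :: "'a sqm" is "mat 1" .
lift_definition plus_sqm :: "'a sqm \<Rightarrow> 'a sqm \<Rightarrow> 'a sqm" is "(+)" .
lift_definition minus_sqm :: "'a sqm \<Rightarrow> 'a sqm \<Rightarrow> 'a sqm" is "(-)" .
lift_definition uminus_sqm :: "'a sqm \<Rightarrow> 'a sqm" is "uminus" .
lift_definition times_sqm :: "'a sqm \<Rightarrow> 'a sqm \<Rightarrow> 'a sqm" is "(**)" .
lift_definition scaleR_sqm :: "real \<Rightarrow> 'a sqm \<Rightarrow> 'a sqm" is "scaleR" .
lift_definition norm_sqm :: "'a sqm \<Rightarrow> real" is "\<lambda>A. onorm ((*v) A)" .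
definition dist_sqm :: "'a sqm \<Rightarrow> 'a sqm \<Rightarrow> real" where "dist_sqm a b = norm (a - b)"
definition uniformity_sqm_def:
  "(uniformity :: ('a sqm \<times> 'a sqm) filter) = (INF e\<in>{0 <..}. principal {(x, y). dist x y < e})"
definition open_sqm :: "'a sqm set \<Rightarrow> bool"
  where "open_sqm S = (\<forall>x\<in>S. \<forall>\<^sub>F (x', y) in uniformity. x' = x \<longrightarrow> y \<in> S)"
definition sgn_sqm :: "'a sqm \<Rightarrow> 'a sqm" where "sgn_sqm x = scaleR (inverse (norm x)) x"
instance
proof
  fix a b c :: "'a sqm" and r s :: real
  show "a * b * c = a * (b * c)" by transfer (simp add: matrix_mul_assoc)
  show "(a + b) * c = a * c + b * c" by transfer (simp add: vec_eq_iff matrix_matrix_mult_def sum.distrib distrib_right)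
  show "a * (b + c) = a * b + a * c" by transfer (simp add: matrix_add_ldistrib)
  show "1 * a = a" by transfer simp
  show "a * 1 = a" by transfer simp
  show "(0::'a sqm) \<noteq> 1" proof transfer
    show "(0::real^'a^'a) \<noteq> mat 1" by (simp add: vec_eq_iff mat_def)
  qed
  show "a + b + c = a + (b + c)" by transfer simp
  show "a + b = b + a" by transfer simp
  show "0 + a = a" by transfer simp
  show "- a + a = 0" by transfer simp
  show "a - b = a + - b" by transfer simp
  show "r *\<^sub>R (a + b) = r *\<^sub>R a + r *\<^sub>R b" by transfer (simp add: scaleR_right_distrib)
  show "(r + s) *\<^sub>R a = r *\<^sub>R a + s *\<^sub>R a" by transfer (simp add: scaleR_left_distrib)
  show "r *\<^sub>R s *\<^sub>R a = (r * s) *\<^sub>R a" by transfer simp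
  show "1 *\<^sub>R a = a" by transfer simp
  show "r *\<^sub>R a * b = r *\<^sub>R (a * b)" by transfer (simp add: scalar_matrix_assoc)
  show "a * r *\<^sub>R b = r *\<^sub>R (a * b)" by transfer (simp add: matrix_scalar_ac scalar_matrix_assoc)
  show "dist a b = norm (a - b)" by (simp add: dist_sqm_def)
  show "sgn a = inverse (norm a) *\<^sub>R a" by (simp add: sgn_sqm_def)
  show "uniformity = (INF e\<in>{0<..}. principal {(x::'a sqm, y). dist x y < e})" by (simp add: uniformity_sqm_def)
  fix U :: "'a sqm set"
  show "open U = (\<forall>x\<in>U. \<forall>\<^sub>F (x', y) in uniformity. x' = x \<longrightarrow> y \<in> U)" by (simp add: open_sqm_def)
  show "(norm a = 0) = (a = 0)" proof transfer
    fix A :: "real^'a^'a"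
    show "(onorm ((*v) A) = 0) = (A = 0)"
      using onorm_eq_0[OF bl_mv[of A]] matrix_eq[of A 0] by auto
  qed
  show "norm (a + b) \<le> norm a + norm b" proof transfer
    fix A B :: "real^'a^'a"
    show "onorm ((*v) (A + B)) \<le> onorm ((*v) A) + onorm ((*v) B)"
    proof -
      have "(*v) (A + B) = (\<lambda>x. A *v x + B *v x)" by (simp add: fun_eq_iff matrix_vector_mult_add_rdistrib)
      then show ?thesis using onorm_triangle[OF bl_mv[of A] bl_mv[of B]] by simp
    qed
  qed
  show "norm (r *\<^sub>R a) = \<bar>r\<bar> * norm a"
  proof -
    have "(*v) (r *\<^sub>R mrep a) = (\<lambda>x. r *\<^sub>R (mrep a *v x))"
      by (simp add: fun_eq_iff matrix_vector_mult_def vec_eq_iff sum_distrib_left mult.assoc)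
    then show ?thesis using onorm_scaleR[OF bl_mv[of "mrep a"], of r]
      by (simp add: norm_sqm.rep_eq scaleR_sqm.rep_eq)
  qed
  show "norm (a * b) \<le> norm a * norm b" proof transfer
    fix A B :: "real^'a^'a"
    have "(*v) (A ** B) = ((*v) A) \<circ> ((*v) B)" by (auto simp: matrix_vector_mul_assoc)
    then show "onorm ((*v) (A ** B)) \<le> onorm ((*v) A) * onorm ((*v) B)"
      using onorm_compose[OF bl_mv[of A] bl_mv[of B]] by simp
  qed
  show "norm (1::'a sqm) = 1" proof transfer
    have "(*v) (mat 1::real^'a^'a) = (\<lambda>x. x)" by (simp add: fun_eq_iff)
    then show "onorm ((*v) (mat 1::real^'a^'a)) = 1" using onorm_id[where 'a="real^'a"] by simp
  qed
qed
end


lemma norm_vec_le_sum: "norm (x::'a::real_normed_vector^'n) \<le> (\<Sum>i\<in>UNIV. norm (x$i))"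
  by (simp add: norm_vec_def L2_set_le_sum)

lemma mrep_bound: "norm (mrep a) \<le> real (CARD('n) * CARD('n)) * norm (a::'n::finite sqm)"
proof -
  have "norm (mrep a) \<le> (\<Sum>i\<in>UNIV. norm (mrep a $ i))" by (rule norm_vec_le_sum)
  also have "\<dots> \<le> (\<Sum>i\<in>(UNIV::'n set). \<Sum>j\<in>(UNIV::'n set). norm a)"
  proof (rule sum_mono)
    fix i
    have "norm (mrep a $ i) \<le> (\<Sum>j\<in>UNIV. \<bar>mrep a $ i $ j\<bar>)" by (rule norm_le_l1_cart)
    also have "\<dots> \<le> (\<Sum>j\<in>(UNIV::'n set). norm a)"
      by (rule sum_mono) (simp add: norm_sqm.rep_eq matrix_component_le_onorm)
    finally show "norm (mrep a $ i) \<le> (\<Sum>j\<in>(UNIV::'n set). norm a)" .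
  qed
  also have "\<dots> = real (CARD('n) * CARD('n)) * norm a" by simp
  finally show ?thesis .
qed

lemma mabs_bound: "norm (mabs M :: 'n::finite sqm) \<le> real (CARD('n) * CARD('n)) * norm M"
proof -
  have "norm (mabs M :: 'n sqm) = onorm ((*v) M)" by (simp add: norm_sqm.rep_eq mabs_inverse)
  also have "\<dots> \<le> (\<Sum>i\<in>UNIV. \<Sum>j\<in>UNIV. \<bar>M $ i $ j\<bar>)" by (rule onorm_le_matrix_component_sum)
  also have "\<dots> \<le> (\<Sum>i\<in>(UNIV::'n set). \<Sum>j\<in>(UNIV::'n set). norm M)"
  proof (intro sum_mono)
    fix i j
    have "\<bar>M $ i $ j\<bar> \<le> norm (M $ i)" by (rule component_le_norm_cart)
    also have "\<dots> \<le> norm M" by (rule Finite_Cartesian_Product.norm_nth_le)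
    finally show "\<bar>M $ i $ j\<bar> \<le> norm M" .
  qed
  also have "\<dots> = real (CARD('n) * CARD('n)) * norm M" by simp
  finally show ?thesis .
qed

lemma bl_mrep: "bounded_linear (mrep :: 'n::finite sqm \<Rightarrow> _)"
  apply (rule bounded_linear_intro[where K="real (CARD('n) * CARD('n))"])
  using mrep_bound by (auto simp: plus_sqm.rep_eq scaleR_sqm.rep_eq mult.commute)

lemma bl_mabs: "bounded_linear (mabs :: _ \<Rightarrow> 'n::finite sqm)"
  apply (rule bounded_linear_intro[where K="real (CARD('n) * CARD('n))"])
  using mabs_bound by (auto simp: plus_sqm_def scaleR_sqm_def mabs_inverse mult.commute)

instance sqm :: (finite) banach
proof
  fix X :: "nat \<Rightarrow> 'a sqm"
  assume "Cauchy X"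
  then have "Cauchy (\<lambda>n. mrep (X n))" by (rule bounded_linear.Cauchy[OF bl_mrep])
  then obtain L where "(\<lambda>n. mrep (X n)) \<longlonglongrightarrow> L" by (auto simp: Cauchy_convergent_iff convergent_def)
  then have "(\<lambda>n. mabs (mrep (X n)) :: 'a sqm) \<longlonglongrightarrow> mabs L" by (rule bounded_linear.tendsto[OF bl_mabs])
  then show "convergent X" by (auto simp: mrep_inverse convergent_def)
qed


lemma norm_mat_sq: "(norm (A::real^'m^'n))\<^sup>2 = (\<Sum>i\<in>UNIV. \<Sum>j\<in>UNIV. (A $ i $ j)\<^sup>2)"
  by (simp add: norm_vec_def L2_set_def sum_nonneg)

lemma norm_transpose: "norm (transpose (A::real^'m^'n)) = norm A"
proof -
  have "(norm (transpose A))\<^sup>2 = (norm A)\<^sup>2"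
    unfolding norm_mat_sq by (simp add: transpose_def) (rule sum.swap)
  then show ?thesis by (simp add: power2_eq_iff_nonneg)
qed

lemma transpose_add: "transpose (A + B) = transpose A + transpose (B::'a::semiring_1^'m^'n)"
  by (simp add: transpose_def vec_eq_iff)
lemma transpose_diff: "transpose (A - B) = transpose A - transpose (B::'a::ring_1^'m^'n)"
  by (simp add: transpose_def vec_eq_iff)
lemma transpose_uminus: "transpose (- A) = - transpose (A::'a::ring_1^'m^'n)"
  by (simp add: transpose_def vec_eq_iff)
lemma transpose_zero: "transpose (0::'a::semiring_1^'m^'n) = 0"
  by (simp add: transpose_def vec_eq_iff)

definition mtr :: "'n::finite sqm \<Rightarrow> 'n sqm" where "mtr a = mabs (transpose (mrep a))"

lemma mrep_mtr: "mrep (mtr a) = transpose (mrep a)"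
  by (simp add: mtr_def mabs_inverse)

lemma bl_mtr: "bounded_linear (mtr :: 'n::finite sqm \<Rightarrow> _)"
proof -
  have "bounded_linear (\<lambda>a::'n sqm. mabs (transpose (mrep a)))"
  proof (rule bounded_linear_compose[OF bl_mabs])
    show "bounded_linear (\<lambda>a::'n sqm. transpose (mrep a))"
    proof (rule bounded_linear_compose[OF _ bl_mrep, of transpose])
      show "bounded_linear (transpose :: real^'n^'n \<Rightarrow> _)"
        by (rule bounded_linear_intro[where K=1]) (auto simp: transpose_add transpose_scalar norm_transpose)
    qed
  qed
  then show ?thesis by (simp add: mtr_def[abs_def])
qed

lemma mtr_mult: "mtr (a * b) = mtr b * mtr a"
  by (simp add: mtr_def times_sqm_def mabs_inverse matrix_transpose_mul)

lemma mtr_power: "mtr (a ^ n) = mtr a ^ n"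
proof (induction n)
  case 0 then show ?case by (simp add: mtr_def one_sqm_def mabs_inverse)
next
  case (Suc n) then show ?case by (simp add: mtr_mult power_Suc2 power_commutes)
qed

lemma mtr_exp: "mtr (exp a) = exp (mtr a)"
proof -
  interpret bounded_linear mtr by (rule bl_mtr)
  have "mtr (exp a) = (\<Sum>n. mtr (a ^ n /\<^sub>R fact n))"
    unfolding exp_def by (rule suminf[OF summable_exp_generic])
  also have "\<dots> = exp (mtr a)" by (simp add: exp_def mtr_power scaleR)
  finally show ?thesis .
qed

definition mexp :: "real^'n^'n \<Rightarrow> real^'n^'n::finite" where "mexp M = mrep (exp (mabs M))"

lemma mexp_zero: "mexp (0::real^'n::finite^'n) = mat 1"
proof -
  have "mabs 0 = (0::'n sqm)" by (simp add: zero_sqm_def)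
  then show ?thesis by (simp add: mexp_def one_sqm.rep_eq)
qed

lemma mexp_deriv: "((\<lambda>t. mexp (t *\<^sub>R M)) has_vector_derivative (mexp (t *\<^sub>R M) ** M)) (at t)"
proof -
  have e: "\<And>t. mabs (t *\<^sub>R M) = t *\<^sub>R mabs M" by (simp add: scaleR_sqm_def mabs_inverse)
  have "((\<lambda>t. mrep (exp (t *\<^sub>R mabs M))) has_vector_derivative mrep (exp (t *\<^sub>R mabs M) * mabs M)) (at t)"
    by (rule bounded_linear.has_vector_derivative[OF bl_mrep exp_scaleR_has_vector_derivative_right])
  then show ?thesis by (simp add: mexp_def e times_sqm.rep_eq mabs_inverse)
qed

lemma mexp_comm: "mexp M ** M = M ** mexp M"
  using exp_times_arg_commute[of "mabs M"]
  by (metis mexp_def times_sqm.rep_eq mabs_inverse UNIV_I)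

lemma mexp_orth:
  assumes "transpose M = - M"
  shows "transpose (mexp M) ** mexp M = mat 1" "mexp M ** transpose (mexp M) = mat 1"
proof -
  have t: "mtr (mabs M) = - mabs M" using assms by (simp add: mtr_def mabs_inverse uminus_sqm_def)
  have "transpose (mexp M) = mrep (exp (- mabs M))"
    by (metis mexp_def mrep_mtr mtr_exp t)
  moreover have "exp (- mabs M) * exp (mabs M) = 1" "exp (mabs M) * exp (- mabs M) = 1"
    using exp_minus_inverse[of "- mabs M"] exp_minus_inverse[of "mabs M"] by simp_all
  ultimately show "transpose (mexp M) ** mexp M = mat 1" "mexp M ** transpose (mexp M) = mat 1"
    by (metis mexp_def times_sqm.rep_eq one_sqm.rep_eq)+
qed



lemma mm_add_r: "(A + B) ** C = A ** C + B ** (C::'a::semiring_1^_^_)"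
  by (simp add: vec_eq_iff matrix_matrix_mult_def sum.distrib distrib_right)
lemma mm_diff_l: "A ** (B - C) = A ** B - A ** (C::'a::ring_1^_^_)"
  by (simp add: vec_eq_iff matrix_matrix_mult_def sum_subtractf right_diff_distrib)
lemma mm_diff_r: "(A - B) ** C = A ** C - B ** (C::'a::ring_1^_^_)"
  by (simp add: vec_eq_iff matrix_matrix_mult_def sum_subtractf left_diff_distrib)
lemma mm_uminus_l: "(- A) ** B = - (A ** (B::'a::ring_1^_^_))"
  by (simp add: vec_eq_iff matrix_matrix_mult_def sum_negf)
lemma mm_uminus_r: "A ** (- B) = - (A ** (B::'a::ring_1^_^_))"
  by (simp add: vec_eq_iff matrix_matrix_mult_def sum_negf)
lemma mm_scaleR_l: "(k *\<^sub>R A) ** B = k *\<^sub>R (A ** (B::real^_^_))"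
  by (simp add: scalar_matrix_assoc)
lemma mm_scaleR_r: "A ** (k *\<^sub>R B) = k *\<^sub>R (A ** (B::real^_^_))"
  by (simp add: matrix_scalar_ac scalar_matrix_assoc)

lemma norm_mat_rows: "(norm (A::real^'m^'n))\<^sup>2 = (\<Sum>i\<in>UNIV. (norm (A $ i))\<^sup>2)"
  by (simp add: norm_vec_def L2_set_def sum_nonneg)

lemma norm_mm: "norm (A ** B) \<le> norm A * norm (B::real^'k^'m)"
proof -
  have e: "(A ** B) $ i $ j = inner (A $ i) (transpose B $ j)" for i j
    by (simp add: matrix_matrix_mult_def inner_vec_def transpose_def)
  have "(norm (A ** B))\<^sup>2 = (\<Sum>i\<in>UNIV. \<Sum>j\<in>UNIV. (inner (A $ i) (transpose B $ j))\<^sup>2)"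
    by (simp add: norm_mat_sq e)
  also have "\<dots> \<le> (\<Sum>i\<in>UNIV. \<Sum>j\<in>UNIV. (norm (A $ i))\<^sup>2 * (norm (transpose B $ j))\<^sup>2)"
  proof (intro sum_mono)
    fix i j
    have "\<bar>inner (A $ i) (transpose B $ j)\<bar> \<le> norm (A $ i) * norm (transpose B $ j)"
      by (rule Cauchy_Schwarz_ineq2)
    then have "\<bar>inner (A $ i) (transpose B $ j)\<bar>\<^sup>2 \<le> (norm (A $ i) * norm (transpose B $ j))\<^sup>2"
      by (rule power_mono) simp
    then show "(inner (A $ i) (transpose B $ j))\<^sup>2 \<le> (norm (A $ i))\<^sup>2 * (norm (transpose B $ j))\<^sup>2"
      by (simp add: power_mult_distrib)
  qed
  also have "\<dots> = (\<Sum>i\<in>UNIV. (norm (A $ i))\<^sup>2) * (\<Sum>j\<in>UNIV. (norm (transpose B $ j))\<^sup>2)"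
    by (simp add: sum_product)
  also have "\<dots> = (norm A * norm B)\<^sup>2"
    by (simp add: norm_mat_rows[symmetric] norm_transpose power_mult_distrib)
  finally show ?thesis by (simp add: power2_le_iff_abs_le)
qed

lemma bb_mm: "bounded_bilinear ((**) :: real^'m^'n \<Rightarrow> real^'k^'m \<Rightarrow> _)"
  by (rule bounded_bilinear.intro)
    (auto simp: mm_add_r matrix_add_ldistrib mm_scaleR_l mm_scaleR_r intro!: exI[where x=1] norm_mm)

lemma mm_deriv:
  fixes f :: "real \<Rightarrow> real^'m^'n" and g :: "real \<Rightarrow> real^'k^'m"
  assumes "(f has_vector_derivative f') (at x within s)"
    and "(g has_vector_derivative g') (at x within s)"
  shows "((\<lambda>x. f x ** g x) has_vector_derivative (f x ** g' + f' ** g x)) (at x within s)"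
  by (rule bounded_bilinear.has_vector_derivative[OF bb_mm assms])



lemmas msimps = matrix_add_ldistrib mm_add_r mm_diff_l mm_diff_r mm_uminus_l mm_uminus_r
  mm_scaleR_l mm_scaleR_r matrix_mul_assoc transpose_add transpose_diff transpose_uminus
  transpose_scalar matrix_transpose_mul transpose_transpose

definition G :: "real \<Rightarrow> real^'p^'n \<Rightarrow> real^'p^'n \<Rightarrow> real^'p^'n" where
  "G k c c1 = - (c ** (transpose c1 ** c1))
     + (2*k) *\<^sub>R ((c1 - c ** (transpose c ** c1)) ** (transpose c ** c1))"

lemma G_equiv:
  fixes Om :: "real^'n^'n" and P :: "real^'p^'p" and Z W :: "real^'p^'n"
  assumes o: "transpose Om ** Om = mat 1" and p: "P ** transpose P = mat 1"
  shows "G k (Om ** Z ** P) (Om ** W ** P) = Om ** G k Z W ** P"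
proof -
  have o': "\<And>X. X ** transpose Om ** Om = X" using o by (metis matrix_mul_assoc matrix_mul_rid)
  have p': "\<And>X. X ** P ** transpose P = X" using p by (metis matrix_mul_assoc matrix_mul_rid)
  show ?thesis unfolding G_def by (simp add: msimps o p o' p')
qed


lemma vec_two_mult: "(2::real^'p^'n) * X = 2 *\<^sub>R X"
  by (simp add: vec_eq_iff)

definition Eexp :: "real \<Rightarrow> real^'p^'n \<Rightarrow> real^'p^'n \<Rightarrow> real^'p^'n \<Rightarrow> real^'p^'n" where
  "Eexp k c c1 c2 = c2 - k *\<^sub>R (c1 ** transpose c ** c1 + c ** transpose c1 ** c1 + c ** transpose c ** c2)
                + k *\<^sub>R (c1 ** transpose c1 ** c)"

lemma msym_id: "transpose S = S \<Longrightarrow> msym S = S"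
  by (simp add: msym_def scaleR_2[symmetric])

lemma geo_of_G:
  fixes c c1 :: "real^'p^'n"
  assumes h1: "transpose c ** c = mat 1" and h2: "transpose c1 ** c = - (transpose c ** c1)"
  shows "proj_tan c (Eexp k c c1 (G k c c1)) = 0"
proof -
  have h1': "\<And>X. X ** transpose c ** c = X" using h1 by (metis matrix_mul_assoc matrix_mul_rid)
  have h2': "\<And>X. X ** transpose c1 ** c = - (X ** transpose c ** c1)" using h2 by (metis matrix_mul_assoc mm_uminus_r)
  define S where "S = - (transpose c1 ** c1) - (2*k) *\<^sub>R ((transpose c ** c1) ** (transpose c ** c1))"
  have E: "Eexp k c c1 (G k c c1) = c ** S"
    unfolding Eexp_def G_def S_def by (simp add: msimps h1 h1' h2 h2' algebra_simps vec_two_mult)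
  have St: "transpose S = S" unfolding S_def by (simp add: msimps h2 h2')
  have "transpose c ** (c ** S) = S" by (simp add: matrix_mul_assoc h1)
  then show ?thesis unfolding proj_tan_def E by (simp add: msym_id St)
qed


lemma transpose_msym: "transpose (msym X) = msym X"
  by (simp add: msym_def transpose_scalar transpose_add add.commute)

lemma G_of_geo:
  fixes c c1 c2 :: "real^'p^'n"
  assumes h1: "transpose c ** c = mat 1" and h2: "transpose c1 ** c = - (transpose c ** c1)"
    and h3: "transpose c2 ** c + 2 *\<^sub>R (transpose c1 ** c1) + transpose c ** c2 = 0"
    and hk: "k \<noteq> 1" and hE: "proj_tan c (Eexp k c c1 c2) = 0"
  shows "c2 = G k c c1"
proof -
  have h1': "\<And>X. X ** transpose c ** c = X" using h1 by (metis matrix_mul_assoc matrix_mul_rid)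
  have h2': "\<And>X. X ** transpose c1 ** c = - (X ** transpose c ** c1)" using h2 by (metis matrix_mul_assoc mm_uminus_r)
  define E where "E = Eexp k c c1 c2"
  have e1: "E = c ** msym (transpose c ** E)" using hE unfolding proj_tan_def E_def by simp
  have e2: "transpose c ** E = msym (transpose c ** E)"
    by (subst e1) (simp add: matrix_mul_assoc h1)
  have e3: "transpose c ** E = (1-k) *\<^sub>R (transpose c ** c2) - (2*k) *\<^sub>R ((transpose c ** c1) ** (transpose c ** c1)) - k *\<^sub>R (transpose c1 ** c1)"
    unfolding E_def Eexp_def by (simp add: msimps h1 h1' h2 h2' algebra_simps vec_two_mult)
  have e4: "transpose (transpose c ** E) = (1-k) *\<^sub>R (transpose c2 ** c) - (2*k) *\<^sub>R ((transpose c ** c1) ** (transpose c ** c1)) - k *\<^sub>R (transpose c1 ** c1)"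
    unfolding e3 by (simp add: msimps h2 h2')
  have T: "transpose (transpose c ** E) = transpose c ** E" using e2 transpose_msym by metis
  have "(1-k) *\<^sub>R (transpose c2 ** c) - (2*k) *\<^sub>R ((transpose c ** c1) ** (transpose c ** c1)) - k *\<^sub>R (transpose c1 ** c1)
     = (1-k) *\<^sub>R (transpose c ** c2) - (2*k) *\<^sub>R ((transpose c ** c1) ** (transpose c ** c1)) - k *\<^sub>R (transpose c1 ** c1)"
    using T unfolding e4 by (simp only: e3)
  then have "(1-k) *\<^sub>R (transpose c2 ** c) = (1-k) *\<^sub>R (transpose c ** c2)" by simp
  then have sym: "transpose c2 ** c = transpose c ** c2" using hk by simp
  have hM: "transpose c ** c2 = - (transpose c1 ** c1)"
  proof -
    have "2 *\<^sub>R (transpose c ** c2) + 2 *\<^sub>R (transpose c1 ** c1) = 0" using h3 sym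
      by (simp add: scaleR_2 algebra_simps)
    then have "2 *\<^sub>R (transpose c ** c2 + transpose c1 ** c1) = 0" by (simp add: scaleR_right_distrib)
    then show ?thesis by (simp add: eq_neg_iff_add_eq_0)
  qed
  have hM': "\<And>X. X ** transpose c ** c2 = - (X ** transpose c1 ** c1)" using hM by (metis matrix_mul_assoc mm_uminus_r)
  have e5: "E = c ** (- (transpose c1 ** c1) - (2*k) *\<^sub>R ((transpose c ** c1) ** (transpose c ** c1)))"
  proof -
    have "E = c ** (transpose c ** E)" using e1 e2 by metis
    also have "\<dots> = c ** (- (transpose c1 ** c1) - (2*k) *\<^sub>R ((transpose c ** c1) ** (transpose c ** c1)))"
      unfolding e3 hM by (simp add: algebra_simps)
    finally show ?thesis .
  qed
  have e6: "E = c2 - (2*k) *\<^sub>R (c1 ** transpose c ** c1)"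
    unfolding E_def Eexp_def by (simp add: msimps h1 h1' h2 h2' hM hM' algebra_simps vec_two_mult)
  have "c2 = E + (2*k) *\<^sub>R (c1 ** transpose c ** c1)" using e6 by simp
  also have "\<dots> = G k c c1" unfolding e5 G_def by (simp add: msimps algebra_simps)
  finally show ?thesis .
qed


definition gX :: "real \<Rightarrow> real^'p^'n \<Rightarrow> real^'p^'n \<Rightarrow> real^'n^'n" where
  "gX k U D = (D - U ** (transpose U ** D)) ** transpose U - U ** transpose (D - U ** (transpose U ** D))
      + (2*(1-k)) *\<^sub>R (U ** (transpose U ** D) ** transpose U)"
definition gY :: "real \<Rightarrow> real^'p^'n \<Rightarrow> real^'p^'n \<Rightarrow> real^'p^'p" where
  "gY k U D = (2*k-1) *\<^sub>R (transpose U ** D)"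

lemma gXY_vel:
  fixes U D :: "real^'p^'n"
  assumes h1: "transpose U ** U = mat 1"
  shows "gX k U D ** U + U ** gY k U D = D"
proof -
  have h1': "\<And>X. X ** transpose U ** U = X" using h1 by (metis matrix_mul_assoc matrix_mul_rid)
  show ?thesis unfolding gX_def gY_def by (simp add: msimps h1 h1' algebra_simps vec_two_mult)
qed

lemma gXY_acc:
  fixes U D :: "real^'p^'n"
  assumes h1: "transpose U ** U = mat 1" and hA: "transpose D ** U = - (transpose U ** D)"
  shows "gX k U D ** (gX k U D ** U) + 2 *\<^sub>R (gX k U D ** U ** gY k U D) + U ** gY k U D ** gY k U D = G k U D"
proof -
  have h1': "\<And>X. X ** transpose U ** U = X" using h1 by (metis matrix_mul_assoc matrix_mul_rid)
  have hA': "\<And>X. X ** transpose D ** U = - (X ** transpose U ** D)" using hA by (metis matrix_mul_assoc mm_uminus_r)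
  show ?thesis unfolding gX_def gY_def G_def by (simp add: msimps h1 h1' hA hA' algebra_simps vec_two_mult)
qed

lemma gX_skew:
  fixes U D :: "real^'p^'n"
  assumes hA: "transpose D ** U = - (transpose U ** D)"
  shows "transpose (gX k U D) = - gX k U D"
proof -
  have hA': "\<And>X. X ** transpose D ** U = - (X ** transpose U ** D)" using hA by (metis matrix_mul_assoc mm_uminus_r)
  show ?thesis unfolding gX_def by (simp add: msimps hA hA' algebra_simps vec_two_mult)
qed

lemma gY_skew:
  fixes U D :: "real^'p^'n"
  assumes hA: "transpose D ** U = - (transpose U ** D)"
  shows "transpose (gY k U D) = - gY k U D"
  unfolding gY_def using hA by (simp add: msimps)



lemma mexp_comm_t: "mexp (t *\<^sub>R M) ** M = M ** mexp (t *\<^sub>R M)"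
proof -
  have e: "mabs (t *\<^sub>R M) = t *\<^sub>R mabs M" by (simp add: scaleR_sqm_def mabs_inverse)
  show ?thesis using exp_times_scaleR_commute[of t "mabs M"]
    by (metis e mexp_def times_sqm.rep_eq mabs_inverse UNIV_I)
qed

lemma mexp_comm_t': "W ** mexp (t *\<^sub>R M) ** M = W ** M ** mexp (t *\<^sub>R M)"
  by (metis matrix_mul_assoc mexp_comm_t)

lemma vd_eq: "(f has_vector_derivative a) F \<Longrightarrow> a = b \<Longrightarrow> (f has_vector_derivative b) F" by simp

definition cg :: "real \<Rightarrow> real^'p^'n \<Rightarrow> real^'p^'n \<Rightarrow> real \<Rightarrow> real^'p^'n::finite" where
  "cg k U D t = mexp (t *\<^sub>R gX k U D) ** U ** mexp (t *\<^sub>R gY k U D)"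
definition c1g :: "real \<Rightarrow> real^'p^'n \<Rightarrow> real^'p^'n \<Rightarrow> real \<Rightarrow> real^'p^'n::finite" where
  "c1g k U D t = gX k U D ** cg k U D t + cg k U D t ** gY k U D"
definition c2g :: "real \<Rightarrow> real^'p^'n \<Rightarrow> real^'p^'n \<Rightarrow> real \<Rightarrow> real^'p^'n::finite" where
  "c2g k U D t = gX k U D ** c1g k U D t + c1g k U D t ** gY k U D"

lemma cg_deriv: "(cg k U D has_vector_derivative c1g k U D t) (at t)"
proof -
  let ?X = "gX k U D" and ?Y = "gY k U D"
  have d1: "((\<lambda>t. mexp (t *\<^sub>R ?X) ** U) has_vector_derivative (mexp (t *\<^sub>R ?X) ** 0 + (mexp (t *\<^sub>R ?X) ** ?X) ** U)) (at t)"
    by (rule mm_deriv[OF mexp_deriv has_vector_derivative_const])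
  have d2: "((\<lambda>t. mexp (t *\<^sub>R ?X) ** U ** mexp (t *\<^sub>R ?Y)) has_vector_derivative
     ((mexp (t *\<^sub>R ?X) ** U) ** (mexp (t *\<^sub>R ?Y) ** ?Y) + (mexp (t *\<^sub>R ?X) ** 0 + (mexp (t *\<^sub>R ?X) ** ?X) ** U) ** mexp (t *\<^sub>R ?Y))) (at t)"
    by (rule mm_deriv[OF d1 mexp_deriv])
  show ?thesis unfolding cg_def[abs_def] c1g_def cg_def
    by (rule vd_eq[OF d2]) (simp add: msimps mexp_comm_t mexp_comm_t')
qed

lemma c1g_deriv: "(c1g k U D has_vector_derivative c2g k U D t) (at t)"
proof -
  let ?X = "gX k U D" and ?Y = "gY k U D"
  have a: "((\<lambda>t. ?X ** cg k U D t) has_vector_derivative (?X ** c1g k U D t + 0 ** cg k U D t)) (at t)"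
    by (rule mm_deriv[OF has_vector_derivative_const cg_deriv])
  have b: "((\<lambda>t. cg k U D t ** ?Y) has_vector_derivative (cg k U D t ** 0 + c1g k U D t ** ?Y)) (at t)"
    by (rule mm_deriv[OF cg_deriv has_vector_derivative_const])
  show ?thesis unfolding c1g_def[abs_def] c2g_def
    by (rule vd_eq[OF has_vector_derivative_add[OF a b]]) (simp add: c1g_def)
qed


lemma cg_props:
  fixes U D :: "real^'p^'n::finite"
  assumes h1: "transpose U ** U = mat 1" and hA: "transpose D ** U = - (transpose U ** D)"
  shows "transpose (cg k U D t) ** cg k U D t = mat 1"
    and "c2g k U D t = G k (cg k U D t) (c1g k U D t)"
    and "transpose (c1g k U D t) ** cg k U D t = - (transpose (cg k U D t) ** c1g k U D t)"
    and "cg k U D 0 = U" and "c1g k U D 0 = D"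
proof -
  let ?X = "gX k U D" and ?Y = "gY k U D"
  let ?O = "mexp (t *\<^sub>R ?X)" and ?P = "mexp (t *\<^sub>R ?Y)"
  have sX: "transpose ?X = - ?X" by (rule gX_skew[OF hA])
  have sY: "transpose ?Y = - ?Y" by (rule gY_skew[OF hA])
  have o: "transpose ?O ** ?O = mat 1" by (rule mexp_orth) (simp add: transpose_scalar sX)
  have p: "?P ** transpose ?P = mat 1" "transpose ?P ** ?P = mat 1" by (rule mexp_orth, simp add: transpose_scalar sY)+
  have o': "\<And>W. W ** transpose ?O ** ?O = W" using o by (metis matrix_mul_assoc matrix_mul_rid)
  have h1': "\<And>W. W ** transpose U ** U = W" using h1 by (metis matrix_mul_assoc matrix_mul_rid)
  show st: "transpose (cg k U D t) ** cg k U D t = mat 1"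
    unfolding cg_def by (simp add: msimps o o' h1 h1' p)
  have st': "\<And>W. W ** transpose (cg k U D t) ** cg k U D t = W" using st by (metis matrix_mul_assoc matrix_mul_rid)
  have c1: "c1g k U D t = ?O ** (?X ** U + U ** ?Y) ** ?P"
    by (simp add: c1g_def cg_def msimps mexp_comm_t mexp_comm_t')
  have c2: "c2g k U D t = ?O ** (?X ** (?X ** U) + 2 *\<^sub>R (?X ** U ** ?Y) + U ** ?Y ** ?Y) ** ?P"
    by (simp add: c2g_def c1g_def cg_def msimps mexp_comm_t mexp_comm_t' algebra_simps vec_two_mult)
  show "c2g k U D t = G k (cg k U D t) (c1g k U D t)"
    unfolding c2 c1 gXY_acc[OF h1 hA] gXY_vel[OF h1] cg_def
    by (rule G_equiv[symmetric, OF o p(1)])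
  show "transpose (c1g k U D t) ** cg k U D t = - (transpose (cg k U D t) ** c1g k U D t)"
    unfolding c1g_def by (simp add: msimps sX sY st st')
  show "cg k U D 0 = U" by (simp add: cg_def mexp_zero)
  show "c1g k U D 0 = D" by (simp add: c1g_def cg_def mexp_zero gXY_vel[OF h1])
qed

lemma Eexp_alpha: "proj_tan c (c2 - alpha_coef \<alpha> *\<^sub>R (c1 ** transpose c ** c1 + c ** transpose c1 ** c1 + c ** transpose c ** c2)
                + alpha_coef \<alpha> *\<^sub>R (c1 ** transpose c1 ** c)) = proj_tan c (Eexp (alpha_coef \<alpha>) c c1 c2)"
  by (simp add: Eexp_def)

lemma cg_geodesic:
  fixes U D :: "real^'p^'n::finite"
  assumes h1: "transpose U ** U = mat 1" and hA: "transpose D ** U = - (transpose U ** D)"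
  shows "alpha_geodesic \<alpha> (cg (alpha_coef \<alpha>) U D)"
  unfolding alpha_geodesic_def
proof (intro conjI allI exI)
  let ?k = "alpha_coef \<alpha>"
  fix t
  show "cg ?k U D t \<in> stiefel" using cg_props(1)[OF h1 hA] by (simp add: stiefel_def)
  show "(cg ?k U D has_vector_derivative c1g ?k U D t) (at t)" by (rule cg_deriv)
  show "(c1g ?k U D has_vector_derivative c2g ?k U D t) (at t)" by (rule c1g_deriv)
  show "proj_tan (cg ?k U D t) (c2g ?k U D t - ?k *\<^sub>R (c1g ?k U D t ** transpose (cg ?k U D t) ** c1g ?k U D t
        + cg ?k U D t ** transpose (c1g ?k U D t) ** c1g ?k U D t + cg ?k U D t ** transpose (cg ?k U D t) ** c2g ?k U D t)
        + ?k *\<^sub>R (c1g ?k U D t ** transpose (c1g ?k U D t) ** cg ?k U D t)) = 0"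
    unfolding Eexp_alpha cg_props(2)[OF h1 hA]
    by (rule geo_of_G[OF cg_props(1)[OF h1 hA] cg_props(3)[OF h1 hA]])
qed



lemma gronwall0:
  fixes f f' :: "real \<Rightarrow> real"
  assumes d: "\<And>t. t \<in> {0..1} \<Longrightarrow> (f has_real_derivative f' t) (at t)"
    and b: "\<And>t. t \<in> {0..1} \<Longrightarrow> f' t \<le> K * f t"
    and nn: "\<And>t. t \<in> {0..1} \<Longrightarrow> 0 \<le> f t" and z: "f 0 = 0"
  shows "f 1 = 0"
proof -
  define g where "g = (\<lambda>t. exp (- K * t) * f t)"
  have gd: "(g has_real_derivative exp (- K * t) * (f' t - K * f t)) (at t)" if t: "t \<in> {0..1}" for t
  proof -
    have "((\<lambda>t. exp (- K * t) * f t) has_real_derivative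
        (exp (- K * t) * (- K)) * f t + exp (- K * t) * f' t) (at t)"
      by (auto intro!: derivative_eq_intros d[OF t])
    then show ?thesis unfolding g_def by (simp add: algebra_simps)
  qed
  have gn: "exp (- K * t) * (f' t - K * f t) \<le> 0" if t: "t \<in> {0..1}" for t
    using b[OF t] by (simp add: mult_nonneg_nonpos)
  have "g 1 \<le> g 0" by (rule deriv_nonpos_imp_antimono[OF gd gn]) auto
  then have "g 1 \<le> 0" by (simp add: g_def z)
  then have "f 1 \<le> 0" by (simp add: g_def mult_le_0_iff)
  with nn[of 1] show ?thesis by simp
qed

definition lipR :: "real \<Rightarrow> ('a::real_normed_vector \<Rightarrow> 'b::real_normed_vector) \<Rightarrow> bool" where
  "lipR R f \<longleftrightarrow> (\<exists>L. \<forall>u v. norm u \<le> R \<longrightarrow> norm v \<le> R \<longrightarrow> norm (f u - f v) \<le> L * norm (u - v))"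
definition bndR :: "real \<Rightarrow> ('a::real_normed_vector \<Rightarrow> 'b::real_normed_vector) \<Rightarrow> bool" where
  "bndR R f \<longleftrightarrow> (\<exists>B. \<forall>u. norm u \<le> R \<longrightarrow> norm (f u) \<le> B)"

lemma lipR_fst: "lipR R fst"
  unfolding lipR_def by (rule exI[of _ 1]) (metis fst_diff norm_fst_le prod.collapse mult_1)
lemma lipR_snd: "lipR R snd"
  unfolding lipR_def by (rule exI[of _ 1]) (metis snd_diff norm_snd_le prod.collapse mult_1)
lemma bndR_fst: "bndR R fst"
  unfolding bndR_def by (rule exI[of _ R]) (metis norm_fst_le prod.collapse order_trans)
lemma bndR_snd: "bndR R snd"
  unfolding bndR_def by (rule exI[of _ R]) (metis norm_snd_le prod.collapse order_trans)

lemma lipR_add: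
  fixes f g :: "'a::real_normed_vector \<Rightarrow> 'b::real_normed_vector"
  assumes lf: "lipR R f" and lg: "lipR R g" shows "lipR R (\<lambda>u. f u + g u)"
proof -
  obtain L1 where 1: "\<And>u v. norm u \<le> R \<Longrightarrow> norm v \<le> R \<Longrightarrow> norm (f u - f v) \<le> L1 * norm (u - v)"
    using lf unfolding lipR_def by blast
  obtain L2 where 2: "\<And>u v. norm u \<le> R \<Longrightarrow> norm v \<le> R \<Longrightarrow> norm (g u - g v) \<le> L2 * norm (u - v)"
    using lg unfolding lipR_def by blast
  show ?thesis unfolding lipR_def
  proof (intro exI allI impI)
    fix u v :: 'a assume u: "norm u \<le> R" and v: "norm v \<le> R"
    have "norm (f u + g u - (f v + g v)) \<le> norm (f u - f v) + norm (g u - g v)"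
      by (metis add_diff_add norm_triangle_ineq)
    also have "\<dots> \<le> (L1 + L2) * norm (u - v)" using 1[OF u v] 2[OF u v] by (simp add: algebra_simps)
    finally show "norm (f u + g u - (f v + g v)) \<le> (L1 + L2) * norm (u - v)" .
  qed
qed

lemma lipR_uminus: "lipR R f \<Longrightarrow> lipR R (\<lambda>u. - f u)"
  unfolding lipR_def by (metis minus_diff_eq minus_diff_minus norm_minus_cancel)

lemma lipR_diff: "lipR R f \<Longrightarrow> lipR R g \<Longrightarrow> lipR R (\<lambda>u. f u - g u)"
  using lipR_add[of R f "\<lambda>u. - g u"] lipR_uminus[of R g] by simp

lemma lipR_scaleR:
  fixes f :: "'a::real_normed_vector \<Rightarrow> 'b::real_normed_vector"
  assumes lf: "lipR R f" shows "lipR R (\<lambda>u. a *\<^sub>R f u)"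
proof -
  obtain L where 1: "\<And>u v. norm u \<le> R \<Longrightarrow> norm v \<le> R \<Longrightarrow> norm (f u - f v) \<le> L * norm (u - v)"
    using lf unfolding lipR_def by blast
  show ?thesis unfolding lipR_def
  proof (intro exI allI impI)
    fix u v :: 'a assume u: "norm u \<le> R" and v: "norm v \<le> R"
    have "\<bar>a\<bar> * norm (f u - f v) \<le> \<bar>a\<bar> * (L * norm (u - v))" by (rule mult_left_mono[OF 1[OF u v]]) simp
    then show "norm (a *\<^sub>R f u - a *\<^sub>R f v) \<le> (\<bar>a\<bar> * L) * norm (u - v)"
      by (simp add: scaleR_diff_right[symmetric] mult.assoc)
  qed
qed

lemma lipR_transpose: "lipR R (f::_\<Rightarrow>real^'m^'n) \<Longrightarrow> lipR R (\<lambda>u. transpose (f u))"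
  unfolding lipR_def by (simp add: transpose_diff[symmetric] norm_transpose)

lemma bndR_add: "bndR R f \<Longrightarrow> bndR R g \<Longrightarrow> bndR R (\<lambda>u. f u + g u)"
  unfolding bndR_def by (metis (no_types, opaque_lifting) add_mono norm_triangle_ineq order_trans)
lemma bndR_uminus: "bndR R f \<Longrightarrow> bndR R (\<lambda>u. - f u)"
  unfolding bndR_def by simp
lemma bndR_diff: "bndR R f \<Longrightarrow> bndR R g \<Longrightarrow> bndR R (\<lambda>u. f u - g u)"
  using bndR_add[of R f "\<lambda>u. - g u"] bndR_uminus[of R g] by simp
lemma bndR_scaleR: "bndR R f \<Longrightarrow> bndR R (\<lambda>u. a *\<^sub>R f u)"
  unfolding bndR_def by (metis abs_ge_zero mult_left_mono norm_scaleR)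
lemma bndR_transpose: "bndR R (f::_\<Rightarrow>real^'m^'n) \<Longrightarrow> bndR R (\<lambda>u. transpose (f u))"
  unfolding bndR_def by (simp add: norm_transpose)

lemma bndR_mm:
  fixes f :: "'a::real_normed_vector \<Rightarrow> real^'m^'n" and g :: "'a \<Rightarrow> real^'k^'m"
  assumes bf: "bndR R f" and bg: "bndR R g" shows "bndR R (\<lambda>u. f u ** g u)"
proof -
  obtain B1 where 3: "\<And>u. norm u \<le> R \<Longrightarrow> norm (f u) \<le> B1" using bf unfolding bndR_def by blast
  obtain B2 where 4: "\<And>u. norm u \<le> R \<Longrightarrow> norm (g u) \<le> B2" using bg unfolding bndR_def by blast
  show ?thesis unfolding bndR_def
  proof (intro exI allI impI)
    fix u :: 'a assume u: "norm u \<le> R"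
    have "norm (f u) * norm (g u) \<le> B1 * B2" using 3[OF u] 4[OF u] by (simp add: mult_mono' order_trans[OF norm_ge_zero])
    then show "norm (f u ** g u) \<le> B1 * B2" using norm_mm order_trans by blast
  qed
qed

lemma lipR_mm:
  fixes f :: "'a::real_normed_vector \<Rightarrow> real^'m^'n" and g :: "'a \<Rightarrow> real^'k^'m"
  assumes lf: "lipR R f" and bf: "bndR R f" and lg: "lipR R g" and bg: "bndR R g"
  shows "lipR R (\<lambda>u. f u ** g u)"
proof -
  obtain L1 where 1: "\<And>u v. norm u \<le> R \<Longrightarrow> norm v \<le> R \<Longrightarrow> norm (f u - f v) \<le> L1 * norm (u - v)"
    using lf unfolding lipR_def by blast
  obtain L2 where 2: "\<And>u v. norm u \<le> R \<Longrightarrow> norm v \<le> R \<Longrightarrow> norm (g u - g v) \<le> L2 * norm (u - v)"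
    using lg unfolding lipR_def by blast
  obtain B1 where 3: "\<And>u. norm u \<le> R \<Longrightarrow> norm (f u) \<le> B1" using bf unfolding bndR_def by blast
  obtain B2 where 4: "\<And>u. norm u \<le> R \<Longrightarrow> norm (g u) \<le> B2" using bg unfolding bndR_def by blast
  show ?thesis unfolding lipR_def
  proof (intro exI allI impI)
    fix u v :: 'a assume u: "norm u \<le> R" and v: "norm v \<le> R"
    have e: "f u ** g u - f v ** g v = (f u - f v) ** g u + f v ** (g u - g v)"
      by (simp add: mm_diff_l mm_diff_r)
    have "norm ((f u - f v) ** g u) \<le> norm (f u - f v) * norm (g u)" by (rule norm_mm)
    also have "\<dots> \<le> (L1 * norm (u - v)) * B2"
      using 1[OF u v] 4[OF u] by (simp add: mult_mono' order_trans[OF norm_ge_zero])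
    finally have a: "norm ((f u - f v) ** g u) \<le> (L1 * norm (u - v)) * B2" .
    have "norm (f v ** (g u - g v)) \<le> norm (f v) * norm (g u - g v)" by (rule norm_mm)
    also have "\<dots> \<le> B1 * (L2 * norm (u - v))"
      using 2[OF u v] 3[OF v] by (simp add: mult_mono' order_trans[OF norm_ge_zero])
    finally have b: "norm (f v ** (g u - g v)) \<le> B1 * (L2 * norm (u - v))" .
    have "norm (f u ** g u - f v ** g v) \<le> norm ((f u - f v) ** g u) + norm (f v ** (g u - g v))"
      unfolding e by (rule norm_triangle_ineq)
    also have "\<dots> \<le> (L1 * B2 + B1 * L2) * norm (u - v)" using a b by (simp add: algebra_simps)
    finally show "norm (f u ** g u - f v ** g v) \<le> (L1 * B2 + B1 * L2) * norm (u - v)" .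
  qed
qed

lemma lipR_G: "lipR R (\<lambda>u::(real^'p^'n) \<times> (real^'p^'n). G k (fst u) (snd u))"
  unfolding G_def
  by (intro lipR_add lipR_uminus lipR_mm lipR_scaleR lipR_diff lipR_transpose lipR_fst lipR_snd
      bndR_add bndR_uminus bndR_mm bndR_scaleR bndR_diff bndR_transpose bndR_fst bndR_snd)



lemma bl_transpose: "bounded_linear (transpose :: real^'m^'n \<Rightarrow> real^'n^'m)"
  by (rule bounded_linear_intro[where K=1]) (auto simp: transpose_add transpose_scalar norm_transpose)

lemma lipR_Pair:
  fixes f :: "'a::real_normed_vector \<Rightarrow> 'b::real_normed_vector" and g :: "'a \<Rightarrow> 'c::real_normed_vector"
  assumes lf: "lipR R f" and lg: "lipR R g" shows "lipR R (\<lambda>u. (f u, g u))"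
proof -
  obtain L1 where 1: "\<And>u v. norm u \<le> R \<Longrightarrow> norm v \<le> R \<Longrightarrow> norm (f u - f v) \<le> L1 * norm (u - v)"
    using lf unfolding lipR_def by blast
  obtain L2 where 2: "\<And>u v. norm u \<le> R \<Longrightarrow> norm v \<le> R \<Longrightarrow> norm (g u - g v) \<le> L2 * norm (u - v)"
    using lg unfolding lipR_def by blast
  show ?thesis unfolding lipR_def
  proof (intro exI allI impI)
    fix u v :: 'a assume u: "norm u \<le> R" and v: "norm v \<le> R"
    have "norm ((f u, g u) - (f v, g v)) = norm (f u - f v, g u - g v)" by simp
    also have "\<dots> \<le> norm (f u - f v) + norm (g u - g v)" by (rule norm_Pair_le)
    also have "\<dots> \<le> (L1 + L2) * norm (u - v)" using 1[OF u v] 2[OF u v] by (simp add: algebra_simps)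
    finally show "norm ((f u, g u) - (f v, g v)) \<le> (L1 + L2) * norm (u - v)" .
  qed
qed

lemma geo_facts:
  fixes c c1 c2 :: "real \<Rightarrow> real^'p^'n"
  assumes st: "\<And>t. transpose (c t) ** c t = mat 1"
    and d1: "\<And>t. (c has_vector_derivative c1 t) (at t)"
    and d2: "\<And>t. (c1 has_vector_derivative c2 t) (at t)"
  shows "transpose (c1 t) ** c t = - (transpose (c t) ** c1 t)"
    and "transpose (c2 t) ** c t + 2 *\<^sub>R (transpose (c1 t) ** c1 t) + transpose (c t) ** c2 t = 0"
proof -
  have td1: "\<And>t. ((\<lambda>t. transpose (c t)) has_vector_derivative transpose (c1 t)) (at t)"
    by (rule bounded_linear.has_vector_derivative[OF bl_transpose d1])
  have td2: "\<And>t. ((\<lambda>t. transpose (c1 t)) has_vector_derivative transpose (c2 t)) (at t)"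
    by (rule bounded_linear.has_vector_derivative[OF bl_transpose d2])
  have z1: "transpose (c t) ** c1 t + transpose (c1 t) ** c t = 0" for t
  proof -
    have a: "((\<lambda>t. transpose (c t) ** c t) has_vector_derivative (transpose (c t) ** c1 t + transpose (c1 t) ** c t)) (at t)"
      by (rule mm_deriv[OF td1 d1])
    have "(\<lambda>t. transpose (c t) ** c t) = (\<lambda>t. mat 1)" using st by auto
    then have b: "((\<lambda>t. transpose (c t) ** c t) has_vector_derivative 0) (at t)" by simp
    show ?thesis using vector_derivative_unique_at[OF a b] .
  qed
  then show "transpose (c1 t) ** c t = - (transpose (c t) ** c1 t)" by (simp add: eq_neg_iff_add_eq_0 add.commute)
  have a: "((\<lambda>t. transpose (c t) ** c1 t + transpose (c1 t) ** c t) has_vector_derivative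
     ((transpose (c t) ** c2 t + transpose (c1 t) ** c1 t) + (transpose (c1 t) ** c1 t + transpose (c2 t) ** c t))) (at t)"
    by (rule has_vector_derivative_add[OF mm_deriv[OF td1 d2] mm_deriv[OF td2 d1]])
  have "(\<lambda>t. transpose (c t) ** c1 t + transpose (c1 t) ** c t) = (\<lambda>t. 0)" using z1 by auto
  then have b: "((\<lambda>t. transpose (c t) ** c1 t + transpose (c1 t) ** c t) has_vector_derivative 0) (at t)" by simp
  show "transpose (c2 t) ** c t + 2 *\<^sub>R (transpose (c1 t) ** c1 t) + transpose (c t) ** c2 t = 0"
    using vector_derivative_unique_at[OF a b] by (simp add: scaleR_2 algebra_simps)
qed

lemma alpha_coef_ne1: "alpha_coef \<alpha> \<noteq> 1"
proof
  assume h: "alpha_coef \<alpha> = 1"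
  show False
  proof (cases "\<alpha> + 1 = 0")
    case True then show False using h by (simp add: alpha_coef_def)
  next
    case False
    then have "2 * \<alpha> + 1 = 2 * (\<alpha> + 1)" using h by (simp add: alpha_coef_def field_simps)
    then show False by simp
  qed
qed

lemma geo_G:
  fixes c c1 c2 :: "real \<Rightarrow> real^'p^'n"
  assumes st: "\<And>t. c t \<in> stiefel"
    and d1: "\<And>t. (c has_vector_derivative c1 t) (at t)"
    and d2: "\<And>t. (c1 has_vector_derivative c2 t) (at t)"
    and e: "\<And>t. proj_tan (c t)
          (c2 t - alpha_coef \<alpha> *\<^sub>R (c1 t ** transpose (c t) ** c1 t
                                   + c t ** transpose (c1 t) ** c1 t
                                   + c t ** transpose (c t) ** c2 t)
                + alpha_coef \<alpha> *\<^sub>R (c1 t ** transpose (c1 t) ** c t)) = 0"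
  shows "c2 t = G (alpha_coef \<alpha>) (c t) (c1 t)"
proof -
  have st': "\<And>t. transpose (c t) ** c t = mat 1" using st by (simp add: stiefel_def)
  show ?thesis
    by (rule G_of_geo[OF st' geo_facts(1)[OF st' d1 d2] geo_facts(2)[OF st' d1 d2] alpha_coef_ne1])
       (use e[of t] in \<open>simp only: Eexp_alpha\<close>)
qed


lemma geo_unique:
  fixes c d :: "real \<Rightarrow> real^'p^'n"
  assumes gc: "alpha_geodesic \<alpha> c" and gd: "alpha_geodesic \<alpha> d" and e0: "c 0 = d 0"
    and dc: "(c has_vector_derivative D) (at 0)" and dd: "(d has_vector_derivative D) (at 0)"
  shows "c 1 = d 1"
proof -
  let ?k = "alpha_coef \<alpha>"
  obtain c1 c2 where cst: "\<And>t. c t \<in> stiefel" and c1: "\<And>t. (c has_vector_derivative c1 t) (at t)"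
    and c2: "\<And>t. (c1 has_vector_derivative c2 t) (at t)" and cG: "\<And>t. c2 t = G ?k (c t) (c1 t)"
    using gc unfolding alpha_geodesic_def by (metis geo_G)
  obtain d1 d2 where dst: "\<And>t. d t \<in> stiefel" and d1: "\<And>t. (d has_vector_derivative d1 t) (at t)"
    and d2: "\<And>t. (d1 has_vector_derivative d2 t) (at t)" and dG: "\<And>t. d2 t = G ?k (d t) (d1 t)"
    using gd unfolding alpha_geodesic_def by (metis geo_G)
  have c10: "c1 0 = d1 0" using vector_derivative_unique_at[OF c1 dc] vector_derivative_unique_at[OF d1 dd] by simp
  define F where "F = (\<lambda>u::(real^'p^'n) \<times> (real^'p^'n). (snd u, G ?k (fst u) (snd u)))"
  define y where "y = (\<lambda>t. (c t, c1 t))"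
  define z where "z = (\<lambda>t. (d t, d1 t))"
  have yd: "(y has_vector_derivative F (y t)) (at t)" for t
    unfolding y_def F_def using has_vector_derivative_Pair[OF c1 c2[unfolded cG]] by simp
  have zd: "(z has_vector_derivative F (z t)) (at t)" for t
    unfolding z_def F_def using has_vector_derivative_Pair[OF d1 d2[unfolded dG]] by simp
  have "continuous_on {0..1} y"
    by (rule continuous_at_imp_continuous_on) (metis yd has_vector_derivative_continuous)
  then have "bounded (y ` {0..1})" by (intro compact_imp_bounded compact_continuous_image) auto
  then obtain R1 where R1: "\<And>t. t \<in> {0..1} \<Longrightarrow> norm (y t) \<le> R1" unfolding bounded_iff by (meson imageI)
  have "continuous_on {0..1} z"
    by (rule continuous_at_imp_continuous_on) (metis zd has_vector_derivative_continuous)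
  then have "bounded (z ` {0..1})" by (intro compact_imp_bounded compact_continuous_image) auto
  then obtain R2 where R2: "\<And>t. t \<in> {0..1} \<Longrightarrow> norm (z t) \<le> R2" unfolding bounded_iff by (meson imageI)
  define R where "R = max R1 R2"
  have "lipR R F" unfolding F_def by (intro lipR_Pair lipR_snd lipR_G)
  then obtain L where L: "\<And>u v. norm u \<le> R \<Longrightarrow> norm v \<le> R \<Longrightarrow> norm (F u - F v) \<le> L * norm (u - v)"
    unfolding lipR_def by blast
  define f where "f = (\<lambda>t. inner (y t - z t) (y t - z t))"
  define f' where "f' = (\<lambda>t. inner (y t - z t) (F (y t) - F (z t)) + inner (F (y t) - F (z t)) (y t - z t))"
  have "f 1 = 0"
  proof (rule gronwall0[where f' = f' and K = "2 * L"])
    fix t :: real assume t: "t \<in> {0..1}"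
    have "(f has_vector_derivative f' t) (at t)" unfolding f_def f'_def
      by (rule bounded_bilinear.has_vector_derivative[OF bounded_bilinear_inner]
          has_vector_derivative_diff yd zd)+
    then show "(f has_real_derivative f' t) (at t)" by (simp add: has_real_derivative_iff_has_vector_derivative)
    have "norm (y t) \<le> R" "norm (z t) \<le> R" using R1[OF t] R2[OF t] by (auto simp: R_def)
    then have l: "norm (F (y t) - F (z t)) \<le> L * norm (y t - z t)" by (rule L)
    have "f' t = 2 * inner (y t - z t) (F (y t) - F (z t))" by (simp add: f'_def inner_commute)
    also have "\<dots> \<le> 2 * (norm (y t - z t) * norm (F (y t) - F (z t)))"
      using Cauchy_Schwarz_ineq2[of "y t - z t" "F (y t) - F (z t)"] by simp
    also have "\<dots> \<le> 2 * (norm (y t - z t) * (L * norm (y t - z t)))"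
      using l by (simp add: mult_left_mono)
    also have "\<dots> = 2 * L * f t" by (simp add: f_def power2_norm_eq_inner[symmetric] power2_eq_square)
    finally show "f' t \<le> 2 * L * f t" .
    show "0 \<le> f t" by (simp add: f_def)
  next
    show "f 0 = 0" by (simp add: f_def y_def z_def e0 c10)
  qed
  then have "y 1 - z 1 = 0" unfolding f_def by (simp only: inner_eq_zero_iff)
  then show ?thesis by (simp add: y_def z_def zero_prod_def)
qed



lemma Exp_eq:
  fixes U D :: "real^'p^'n::finite"
  assumes h1: "transpose U ** U = mat 1" and hA: "transpose D ** U = - (transpose U ** D)"
  shows "Exp_alpha \<alpha> U D = cg (alpha_coef \<alpha>) U D 1"
  unfolding Exp_alpha_def
proof (rule the_equality)
  let ?c = "cg (alpha_coef \<alpha>) U D"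
  have d0: "(?c has_vector_derivative D) (at 0)"
    using cg_deriv[of "alpha_coef \<alpha>" U D 0] cg_props(5)[OF h1 hA] by simp
  show "\<exists>c. alpha_geodesic \<alpha> c \<and> c 0 = U \<and> (c has_vector_derivative D) (at 0) \<and> c 1 = ?c 1"
    using cg_geodesic[OF h1 hA] cg_props(4)[OF h1 hA] d0 by blast
  fix Y assume "\<exists>c. alpha_geodesic \<alpha> c \<and> c 0 = U \<and> (c has_vector_derivative D) (at 0) \<and> c 1 = Y"
  then obtain c where g: "alpha_geodesic \<alpha> c" and c0: "c 0 = U" and cd: "(c has_vector_derivative D) (at 0)" and "c 1 = Y" by blast
  moreover have "c 0 = ?c 0" using c0 cg_props(4)[OF h1 hA] by simp
  ultimately show "Y = ?c 1"
    using geo_unique[OF g cg_geodesic[OF h1 hA] _ cd d0] by simp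
qed

definition Vset :: "real^'p^'n \<Rightarrow> real^'p^'n \<Rightarrow> (real^'p^'n) set" where
  "Vset U W = {M. \<exists>X Y. M = U ** X + W ** Y}"

lemma Vset_add: "x \<in> Vset U W \<Longrightarrow> y \<in> Vset U W \<Longrightarrow> x + y \<in> Vset U W"
  unfolding Vset_def
proof (elim CollectE exE, intro CollectI)
  fix X1 Y1 X2 Y2 assume "x = U ** X1 + W ** Y1" "y = U ** X2 + W ** Y2"
  then show "\<exists>X Y. x + y = U ** X + W ** Y"
    by (intro exI[of _ "X1 + X2"] exI[of _ "Y1 + Y2"]) (simp add: matrix_add_ldistrib algebra_simps)
qed

lemma Vset_scale: "x \<in> Vset U W \<Longrightarrow> r *\<^sub>R x \<in> Vset U W"
  unfolding Vset_def
proof (elim CollectE exE, intro CollectI)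
  fix X1 Y1 assume "x = U ** X1 + W ** Y1"
  then show "\<exists>X Y. r *\<^sub>R x = U ** X + W ** Y"
    by (intro exI[of _ "r *\<^sub>R X1"] exI[of _ "r *\<^sub>R Y1"]) (simp add: mm_scaleR_r scaleR_right_distrib)
qed

lemma Vset_zero: "0 \<in> Vset U W"
  unfolding Vset_def by (intro CollectI exI[of _ 0]) simp

lemma Vset_subspace: "subspace (Vset U W)"
  unfolding subspace_def using Vset_zero Vset_add Vset_scale by blast

lemma Vset_closed: "closed (Vset U W)"
  by (rule closed_subspace[OF Vset_subspace])

lemma Vset_rmult: "M \<in> Vset U W \<Longrightarrow> M ** P \<in> Vset U W"
  unfolding Vset_def
proof (elim CollectE exE, intro CollectI)
  fix X1 Y1 assume "M = U ** X1 + W ** Y1"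
  then show "\<exists>X Y. M ** P = U ** X + W ** Y"
    by (intro exI[of _ "X1 ** P"] exI[of _ "Y1 ** P"]) (simp add: mm_add_r matrix_mul_assoc)
qed

lemma Vset_U: "U \<in> Vset U W"
  unfolding Vset_def by (intro CollectI exI[of _ "mat 1"] exI[of _ 0]) simp

lemma mexp_Vset:
  fixes X :: "real^'n::finite^'n" and U :: "real^'p^'n"
  assumes S: "closed S" "subspace S" and U: "U \<in> S" and X: "\<And>Z. X ** Z \<in> S"
  shows "mexp X ** U \<in> S"
proof -
  let ?a = "mabs X"
  have bl: "bounded_linear (\<lambda>a. mrep a ** U)"
    using bounded_linear_compose[OF bounded_bilinear.bounded_linear_left[OF bb_mm, where b=U] bl_mrep] by simp
  have sm: "summable (\<lambda>n. ?a ^ n /\<^sub>R fact n)" by (rule summable_exp_generic)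
  have terms: "mrep (?a ^ n /\<^sub>R fact n) ** U \<in> S" for n
  proof -
    have "mrep (?a ^ n) ** U \<in> S"
    proof (cases n)
      case 0 then show ?thesis using U by (simp add: one_sqm.rep_eq)
    next
      case (Suc m)
      have "mrep (?a ^ n) ** U = X ** (mrep (?a ^ m) ** U)"
        by (simp add: Suc times_sqm.rep_eq mabs_inverse matrix_mul_assoc)
      then show ?thesis using X by simp
    qed
    then show ?thesis using S(2) by (simp add: scaleR_sqm.rep_eq mm_scaleR_l subspace_scale)
  qed
  have "(\<lambda>n. \<Sum>i<n. mrep (?a ^ i /\<^sub>R fact i) ** U) \<longlonglongrightarrow> (\<Sum>n. mrep (?a ^ n /\<^sub>R fact n) ** U)"
    by (rule summable_LIMSEQ[OF bounded_linear.summable[OF bl sm]])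
  moreover have "(\<Sum>n. mrep (?a ^ n /\<^sub>R fact n) ** U) = mexp X ** U"
    using bounded_linear.suminf[OF bl sm] by (simp add: mexp_def exp_def)
  ultimately have "(\<lambda>n. \<Sum>i<n. mrep (?a ^ i /\<^sub>R fact i) ** U) \<longlonglongrightarrow> mexp X ** U" by simp
  moreover have "\<And>n. (\<Sum>i<n. mrep (?a ^ i /\<^sub>R fact i) ** U) \<in> S"
    by (rule subspace_sum[OF S(2)]) (rule terms)
  ultimately show ?thesis by (rule closed_sequentially[OF S(1), rotated])
qed



definition Tset :: "real^'p^'n \<Rightarrow> real^'p^'n \<Rightarrow> (real^'p^'n) set" where
  "Tset U W = {M. \<exists>A R. skew A \<and> M = U ** A + W ** R}"

lemma Tset_Vset: "M \<in> Tset U W \<Longrightarrow> M \<in> Vset U W"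
  unfolding Tset_def Vset_def by blast

lemma Tset_diff: "x \<in> Tset U W \<Longrightarrow> y \<in> Tset U W \<Longrightarrow> x - y \<in> Tset U W"
  unfolding Tset_def
proof (elim CollectE exE conjE, intro CollectI)
  fix A1 R1 A2 R2 assume "skew A1" "x = U ** A1 + W ** R1" "skew A2" "y = U ** A2 + W ** R2"
  then show "\<exists>A R. skew A \<and> x - y = U ** A + W ** R"
    by (intro exI[of _ "A1 - A2"] exI[of _ "R1 - R2"]) (simp add: skew_def mm_diff_l transpose_diff algebra_simps)
qed

lemma Tset_scale: "x \<in> Tset U W \<Longrightarrow> r *\<^sub>R x \<in> Tset U W"
  unfolding Tset_def
proof (elim CollectE exE conjE, intro CollectI)
  fix A1 R1 assume "skew A1" "x = U ** A1 + W ** R1"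
  then show "\<exists>A R. skew A \<and> r *\<^sub>R x = U ** A + W ** R"
    by (intro exI[of _ "r *\<^sub>R A1"] exI[of _ "r *\<^sub>R R1"]) (simp add: skew_def mm_scaleR_r transpose_scalar scaleR_right_distrib)
qed

locale setting =
  fixes U W :: "real^'p^'n::finite"
  assumes h1: "transpose U ** U = mat 1" and hW: "transpose U ** W = 0"
begin

lemma h1': "X ** transpose U ** U = X" using h1 by (metis matrix_mul_assoc matrix_mul_rid)
lemma hW': "X ** transpose U ** W = 0" using hW by (metis matrix_mul_assoc times0_right)
lemma hWt: "transpose W ** U = 0" using hW by (metis matrix_transpose_mul transpose_transpose transpose_zero)
lemma hWt': "X ** transpose W ** U = 0" using hWt by (metis matrix_mul_assoc times0_right)

lemma T_UtD: "D = U ** A + W ** R \<Longrightarrow> transpose U ** D = A"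
  by (simp add: msimps h1 hW)

lemma Tset_tangent: "D \<in> Tset U W \<Longrightarrow> transpose D ** U = - (transpose U ** D)"
  unfolding Tset_def skew_def by (auto simp: msimps h1 hW hWt h1' hWt')

lemma gX_Vset:
  assumes "D \<in> Tset U W" shows "gX k U D ** Z \<in> Vset U W"
proof -
  obtain A R where A: "skew A" and D: "D = U ** A + W ** R" using assms unfolding Tset_def by blast
  have UD: "transpose U ** D = A" by (rule T_UtD[OF D])
  have B: "D - U ** A = W ** R" using D by simp
  have "gX k U D ** Z = U ** (- (transpose (W ** R) ** Z) + (2*(1-k)) *\<^sub>R (A ** (transpose U ** Z)))
      + W ** (R ** (transpose U ** Z))"
    unfolding gX_def B UD by (simp add: msimps algebra_simps)
  then show ?thesis unfolding Vset_def by blast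
qed

lemma Exp_Vset:
  assumes D: "D \<in> Tset U W" shows "Exp_alpha \<alpha> U D \<in> Vset U W"
proof -
  have "Exp_alpha \<alpha> U D = cg (alpha_coef \<alpha>) U D 1" by (rule Exp_eq[OF h1 Tset_tangent[OF D]])
  also have "\<dots> = mexp (gX (alpha_coef \<alpha>) U D) ** U ** mexp (gY (alpha_coef \<alpha>) U D)" by (simp add: cg_def)
  also have "\<dots> \<in> Vset U W"
    by (intro Vset_rmult mexp_Vset Vset_closed Vset_subspace Vset_U gX_Vset[OF D])
  finally show ?thesis .
qed

lemma Exp_zero: "Exp_alpha \<alpha> U 0 = U"
proof -
  have "Exp_alpha \<alpha> U 0 = cg (alpha_coef \<alpha>) U 0 1" by (rule Exp_eq[OF h1]) (simp add: transpose_zero)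
  also have "\<dots> = U" by (simp add: cg_def gX_def gY_def transpose_zero mexp_zero)
  finally show ?thesis .
qed

lemma proj_Vset: "Y \<in> Vset U W \<Longrightarrow> E \<in> Vset U W \<Longrightarrow> norm_proj g Y E \<in> Vset U W"
  unfolding norm_proj_def proj_tan_def
  by (intro Vset_scale subspace_diff[OF Vset_subspace] Vset_rmult)

lemma projU_Tset: "E \<in> Vset U W \<Longrightarrow> norm_proj g U E \<in> Tset U W"
proof -
  assume "E \<in> Vset U W"
  then obtain X Y where E: "E = U ** X + W ** Y" unfolding Vset_def by blast
  have "transpose U ** E = X" by (rule T_UtD[OF E])
  then have "proj_tan U E = U ** (X - msym X) + W ** Y" by (simp add: proj_tan_def E mm_diff_l)
  moreover have "skew (X - msym X)"
    unfolding skew_def msym_def by (simp add: transpose_diff transpose_scalar transpose_add algebra_simps scaleR_2[symmetric])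
  ultimately have "proj_tan U E \<in> Tset U W" unfolding Tset_def by blast
  then show ?thesis unfolding norm_proj_def by (rule Tset_scale)
qed

lemma fold_Vset:
  assumes "\<And>j. Us j \<in> Vset U W"
  shows "E \<in> Vset U W \<Longrightarrow> fold (\<lambda>j E. norm_proj g (Us j) E) xs E \<in> Vset U W"
proof (induction xs arbitrary: E)
  case Nil then show ?case by simp
next
  case (Cons a xs) then show ?case using proj_Vset[OF assms] by simp
qed

lemma pass_Tset:
  assumes D: "D \<in> Tset U W" and t0: "t 0 = 0" and Ut: "Ut \<in> Vset U W"
  shows "fst (shoot_pass \<alpha> t m U Ut D) \<in> Tset U W"
proof -
  define Us where "Us = (\<lambda>j. Exp_alpha \<alpha> U (t j *\<^sub>R D))"
  define \<gamma> where "\<gamma> = norm (Us m - Ut)"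
  have UsV: "\<And>j. Us j \<in> Vset U W" unfolding Us_def by (intro Exp_Vset Tset_scale D)
  have Us0: "Us 0 = U" by (simp add: Us_def t0 Exp_zero)
  have r: "rev [0..<Suc m] = rev [Suc 0..<Suc m] @ [0]" by (simp add: upt_conv_Cons)
  have "fst (shoot_pass \<alpha> t m U Ut D) = norm_proj \<gamma> (Us 0) (fold (\<lambda>j E. norm_proj \<gamma> (Us j) E) (rev [Suc 0..<Suc m]) (Us m - Ut))"
    unfolding shoot_pass_def Let_def Us_def[symmetric] \<gamma>_def[symmetric] r by simp
  also have "\<dots> \<in> Tset U W" unfolding Us0
    by (intro projU_Tset fold_Vset UsV subspace_diff[OF Vset_subspace] Ut)
  finally show ?thesis .
qed

lemma iter_Tset:
  assumes t0: "t 0 = 0" and Ut: "Ut \<in> Vset U W"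
  shows "fst (shoot_iter \<alpha> t m U Ut k) \<in> Tset U W"
proof (induction k)
  case 0 then show ?case by (simp add: Let_def projU_Tset[OF Ut])
next
  case (Suc k) then show ?case by (simp add: Let_def Tset_diff pass_Tset[where t=t, OF _ t0 Ut])
qed

end

theorem proposition3p5:
  fixes N :: "((real, 'p::{finite,linorder}) vec, 'p) vec"
    and U Ut Q :: "((real, 'p) vec, 'n::finite) vec"
    and \<alpha> \<epsilon> :: real and t :: "nat \<Rightarrow> real" and m :: nat
  assumes "CARD('p) \<le> CARD('n)"
    and "\<alpha> \<noteq> -1"
    and "U \<in> stiefel" and "Ut \<in> stiefel"
    and "Q \<in> stiefel"
    and "\<forall>i j. j < i \<longrightarrow> N $ i $ j = 0"
    and "Q ** N = (mat 1 - U ** transpose U) ** Ut"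
    and "\<epsilon> > 0"
    and "t 0 = 0" and "strict_mono_on {0..m} t" and "t m = 1"
  shows "(\<forall>k. (\<forall>i<k. snd (shoot_iter \<alpha> t m U Ut i) > \<epsilon>) \<longrightarrow>
            (\<exists>A R. skew A \<and> fst (shoot_iter \<alpha> t m U Ut k) = U ** A + Q ** R))
       \<and> (\<forall>k. (\<forall>i\<le>k. snd (shoot_iter \<alpha> t m U Ut i) > \<epsilon>) \<longrightarrow>
            (\<exists>A R. skew A \<and>
               fst (shoot_pass \<alpha> t m U Ut (fst (shoot_iter \<alpha> t m U Ut k))) = U ** A + Q ** R))"
proof -
  have h1: "transpose U ** U = mat 1" using assms(3) by (simp add: stiefel_def)
  define W where "W = Q ** N"
  have Wd: "W = Ut - U ** (transpose U ** Ut)" using assms(7) by (simp add: W_def mm_diff_r matrix_mul_assoc)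
  have hW: "transpose U ** W = 0" unfolding Wd by (simp add: mm_diff_l matrix_mul_assoc h1)
  interpret setting U W using h1 hW by unfold_locales
  have Ut: "Ut \<in> Vset U W" unfolding Vset_def
    by (intro CollectI exI[of _ "transpose U ** Ut"] exI[of _ "mat 1"]) (simp add: Wd)
  have conv: "\<exists>A R. skew A \<and> M = U ** A + Q ** R" if MT: "M \<in> Tset U W" for M
  proof -
    obtain A R where "skew A" "M = U ** A + W ** R" using MT unfolding Tset_def by blast
    then show ?thesis by (intro exI[of _ A] exI[of _ "N ** R"]) (simp add: W_def matrix_mul_assoc)
  qed
  have i: "fst (shoot_iter \<alpha> t m U Ut k) \<in> Tset U W" for k by (rule iter_Tset[where t=t, OF assms(9) Ut])
  have p: "fst (shoot_pass \<alpha> t m U Ut (fst (shoot_iter \<alpha> t m U Ut k))) \<in> Tset U W" for k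
    by (rule pass_Tset[where t=t, OF i assms(9) Ut])
  show ?thesis using conv i p by blast
qed


end
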